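(* Let $\Sigma$ be a finite alphabet and let $C \subseteq \Sigma^n$ be a code with $|C|\ge 2$ and minimum Levenshtein distance $d$. Let $t_\mathsf{I}$ and $t_\mathsf{D}$ be non-negative integers with $t_\mathsf{D} \leq n$ such that $N = n + t_\mathsf{I} - t_\mathsf{D}$ is a positive integer, let $v \in \Sigma^N$ be any word, and let $\ell = |B_\mathsf{L}(v, t_\mathsf{D}, t_\mathsf{I}) \cap C|$. If $$\frac{d}{2} > t_\mathsf{D} + \frac{t_\mathsf{I}(n-t_\mathsf{D})}{N},$$ then $$\ell \leq \frac{N(d/2 - t_\mathsf{D})}{N(d/2-t_\mathsf{D})-t_\mathsf{I}(n-t_\mathsf{D})}.$$
   Context: For words $x,y$ over $\Sigma$ (possibly of different lengths), the Levenshtein distance $d_\mathsf{L}(x,y)$ is the minimum number of single-symbol insertions and deletions needed to transform $x$ into $y$. The minimum Levenshtein distance of a code $C$ is $\min\{d_\mathsf{L}(c_1,c_2): c_1\neq c_2 \in C\}$. For a word $v$ and non-negative integers $a,b$, $B_\mathsf{L}(v,a,b)$ denotes the set of all words obtainable from $v$ by at most $a$ insertions and at most $b$ deletions. *)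

theory Defs
  imports Complex_Main
begin

definition ins_step :: "'a set \<Rightarrow> 'a list \<Rightarrow> 'a list \<Rightarrow> bool" where
  "ins_step \<Sigma> x y \<longleftrightarrow> (\<exists>u w a. a \<in> \<Sigma> \<and> x = u @ w \<and> y = u @ a # w)"

definition del_step :: "'a list \<Rightarrow> 'a list \<Rightarrow> bool" where
  "del_step x y \<longleftrightarrow> (\<exists>u w a. x = u @ a # w \<and> y = u @ w)"

inductive edits :: "'a set \<Rightarrow> 'a list \<Rightarrow> nat \<Rightarrow> nat \<Rightarrow> 'a list \<Rightarrow> bool" for \<Sigma> where
  refl: "edits \<Sigma> x 0 0 x"
| ins: "edits \<Sigma> x i j y \<Longrightarrow> ins_step \<Sigma> y z \<Longrightarrow> edits \<Sigma> x (Suc i) j z"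
| del: "edits \<Sigma> x i j y \<Longrightarrow> del_step y z \<Longrightarrow> edits \<Sigma> x i (Suc j) z"

definition lev_dist :: "'a set \<Rightarrow> 'a list \<Rightarrow> 'a list \<Rightarrow> nat" where
  "lev_dist \<Sigma> x y = (LEAST k. \<exists>i j. i + j = k \<and> edits \<Sigma> x i j y)"

definition lev_ball :: "'a set \<Rightarrow> 'a list \<Rightarrow> nat \<Rightarrow> nat \<Rightarrow> 'a list set" where
  "lev_ball \<Sigma> v a b = {y. \<exists>i j. i \<le> a \<and> j \<le> b \<and> edits \<Sigma> v i j y}"

definition min_lev_dist :: "'a set \<Rightarrow> 'a list set \<Rightarrow> nat" where
  "min_lev_dist \<Sigma> C = Min {lev_dist \<Sigma> c1 c2 | c1 c2. c1 \<in> C \<and> c2 \<in> C \<and> c1 \<noteq> c2}"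

end

theory Submission
  imports Defs "HOL-Library.Sublist"
begin

lemma edits_cons: "edits \<Sigma> x i j y \<Longrightarrow> edits \<Sigma> (a#x) i j (a#y)"
proof (induction rule: edits.induct)
  case (refl x) then show ?case by (rule edits.refl)
next
  case (ins x i j y z)
  from ins.hyps(2) obtain u w b where "b \<in> \<Sigma>" "y = u @ w" "z = u @ b # w"
    unfolding ins_step_def by blast
  then have "ins_step \<Sigma> (a#y) (a#z)" unfolding ins_step_def
    by (metis append_Cons)
  with ins.IH show ?case by (rule edits.ins)
next
  case (del x i j y z)
  from del.hyps(2) obtain u w b where "y = u @ b # w" "z = u @ w"
    unfolding del_step_def by blast
  then have "del_step (a#y) (a#z)" unfolding del_step_def
    by (metis append_Cons)
  with del.IH show ?case by (rule edits.del)
qed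

lemma edits_trans: "edits \<Sigma> y i' j' z \<Longrightarrow> edits \<Sigma> x i j y \<Longrightarrow> edits \<Sigma> x (i+i') (j+j') z"
proof (induction rule: edits.induct)
  case (refl x) then show ?case by simp
next
  case (ins x i j y z) then show ?case by (simp add: edits.ins)
next
  case (del x i j y z) then show ?case by (simp add: edits.del)
qed

lemma edits_del1: "edits \<Sigma> (a#ys) 0 1 ys"
proof -
  have "del_step (a#ys) ys" unfolding del_step_def by (metis append_Nil)
  then show ?thesis using edits.del[OF edits.refl] by (metis One_nat_def)
qed

lemma edits_ins1: "a \<in> \<Sigma> \<Longrightarrow> edits \<Sigma> ys 1 0 (a#ys)"
proof -
  assume "a \<in> \<Sigma>"
  then have "ins_step \<Sigma> ys (a#ys)" unfolding ins_step_def by (metis append_Nil)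
  then show ?thesis using edits.ins[OF edits.refl] by (metis One_nat_def)
qed

lemma del_subseq: "subseq w x \<Longrightarrow> edits \<Sigma> x 0 (length x - length w) w"
proof (induction rule: list_emb.induct)
  case (list_emb_Nil ys)
  show ?case
  proof (induction ys)
    case Nil then show ?case by (simp add: edits.refl)
  next
    case (Cons a ys)
    from edits_trans[OF Cons edits_del1[of \<Sigma> a ys]] show ?case by simp
  qed
next
  case (list_emb_Cons xs ys y)
  have "length xs \<le> length ys" using list_emb_Cons.hyps by (rule list_emb_length)
  from edits_trans[OF list_emb_Cons.IH edits_del1[of \<Sigma> y ys]]
  show ?case using \<open>length xs \<le> length ys\<close> by (simp add: Suc_diff_le)
next
  case (list_emb_Cons2 x y xs ys)
  then show ?case using edits_cons by fastforce
qed

lemma ins_supseq: "subseq w y \<Longrightarrow> set y \<subseteq> \<Sigma> \<Longrightarrow> edits \<Sigma> w (length y - length w) 0 y"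
proof (induction rule: list_emb.induct)
  case (list_emb_Nil ys)
  then show ?case
  proof (induction ys)
    case Nil then show ?case by (simp add: edits.refl)
  next
    case (Cons a ys)
    then have "edits \<Sigma> [] (length ys) 0 ys" "a \<in> \<Sigma>" by auto
    from edits_trans[OF edits_ins1[OF this(2)] this(1)] show ?case by simp
  qed
next
  case (list_emb_Cons xs ys y)
  have "length xs \<le> length ys" using list_emb_Cons.hyps by (rule list_emb_length)
  from list_emb_Cons have "edits \<Sigma> xs (length ys - length xs) 0 ys" "y \<in> \<Sigma>" by auto
  from edits_trans[OF edits_ins1[OF this(2)] this(1)]
  show ?case using \<open>length xs \<le> length ys\<close> by (simp add: Suc_diff_le)
next
  case (list_emb_Cons2 x y xs ys)
  then show ?case using edits_cons by fastforce
qed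

lemma del_helper:
  assumes "subseq xs (u @ a # w)"
  shows "\<exists>ys. subseq ys xs \<and> length xs \<le> Suc (length ys) \<and> subseq ys (u @ w)"
proof -
  from assms obtain us vs where
    h: "xs = us @ vs" "subseq us u" "subseq vs (a # w)" by (auto simp: subseq_append_iff)
  have "subseq (tl vs) w"
  proof (cases vs)
    case Nil then show ?thesis by simp
  next
    case (Cons b vs')
    with h(3) show ?thesis
      by (cases "b = a") (auto intro: subseq_Cons')
  qed
  have "subseq (tl vs) vs" by (cases vs) auto
  show ?thesis
    apply (rule exI[of _ "us @ tl vs"])
    using h \<open>subseq (tl vs) w\<close> \<open>subseq (tl vs) vs\<close>
    by (auto intro: list_emb_append_mono)
qed


lemma nths_mono: "A \<subseteq> B \<Longrightarrow> subseq (nths xs A) (nths xs B)"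
proof (induction xs arbitrary: A B)
  case Nil then show ?case by simp
next
  case (Cons x xs)
  have "{j. Suc j \<in> A} \<subseteq> {j. Suc j \<in> B}" using Cons.prems by auto
  then have IH: "subseq (nths xs {j. Suc j \<in> A}) (nths xs {j. Suc j \<in> B})" by (rule Cons.IH)
  show ?case using Cons.prems IH by (auto simp: nths_Cons)
qed

lemma subseq_nths_nths: "subseq ys (nths x S) \<Longrightarrow> \<exists>S'\<subseteq>S. ys = nths x S'"
proof -
  assume "subseq ys (nths x S)"
  then obtain T where "ys = nths (nths x S) T" by (auto simp: subseq_conv_nths)
  then show ?thesis unfolding nths_nths by (intro exI[of _ "{i \<in> S. card {i' \<in> S. i' < i} \<in> T}"]) auto
qed

lemma length_nths_sub: "S \<subseteq> {..<length x} \<Longrightarrow> length (nths x S) = card S"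
proof -
  assume "S \<subseteq> {..<length x}"
  then have "{i. i < length x \<and> i \<in> S} = S" by auto
  then show ?thesis by (simp add: length_nths)
qed

lemma edits_common:
  "edits \<Sigma> x i j y \<Longrightarrow> \<exists>S \<subseteq> {..<length x}. length x \<le> card S + j \<and> subseq (nths x S) y"
proof (induction rule: edits.induct)
  case (refl x)
  show ?case by (rule exI[of _ "{..<length x}"]) (simp add: nths_all)
next
  case (ins x i j y z)
  then obtain S where S: "S \<subseteq> {..<length x}" "length x \<le> card S + j" "subseq (nths x S) y" by blast
  from ins.hyps(2) obtain u w b where "y = u @ w" "z = u @ b # w"
    unfolding ins_step_def by blast
  then have "subseq y z" by (auto intro: list_emb_append_mono)
  with S show ?case by (meson subseq_order.order_trans)
next
  case (del x i j y z)
  then obtain S where S: "S \<subseteq> {..<length x}" "length x \<le> card S + j" "subseq (nths x S) y" by blast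
  from del.hyps(2) obtain u w b where "y = u @ b # w" "z = u @ w"
    unfolding del_step_def by blast
  with S(3) del_helper obtain ys where ys: "subseq ys (nths x S)" "length (nths x S) \<le> Suc (length ys)" "subseq ys z"
    by metis
  from subseq_nths_nths[OF ys(1)] obtain S' where S': "S' \<subseteq> S" "ys = nths x S'" by blast
  have "S' \<subseteq> {..<length x}" using S' S by auto
  have "length ys = card S'" using S' \<open>S' \<subseteq> {..<length x}\<close> length_nths_sub by blast
  moreover have "length (nths x S) = card S" using S(1) length_nths_sub by blast
  ultimately show ?case using S' S ys \<open>S' \<subseteq> {..<length x}\<close> by (intro exI[of _ S']) auto
qed

lemma lev_bound:
  assumes "length c1 = n" "length c2 = n" "set c2 \<subseteq> \<Sigma>" "subseq w c1" "subseq w c2"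
  shows "lev_dist \<Sigma> c1 c2 \<le> 2 * (n - length w)"
proof -
  have "edits \<Sigma> c1 0 (n - length w) w" using del_subseq[OF assms(4)] assms by simp
  moreover have "edits \<Sigma> w (n - length w) 0 c2" using ins_supseq[OF assms(5,3)] assms by simp
  ultimately have "edits \<Sigma> c1 (n - length w) (n - length w) c2" using edits_trans by fastforce
  then have "\<exists>i j. i + j = 2 * (n - length w) \<and> edits \<Sigma> c1 i j c2" by (intro exI) auto
  then show ?thesis unfolding lev_dist_def by (rule Least_le)
qed


lemma sum_ind: "finite X \<Longrightarrow> (\<Sum>p\<in>X. if p \<in> A then 1 else 0 :: real) = real (card (X \<inter> A))"
  by (simp add: sum.If_cases Int_def)

lemma cauchy_schwarz_sum:
  fixes f :: "'b \<Rightarrow> real"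
  assumes "finite A"
  shows "(\<Sum>p\<in>A. f p)^2 \<le> real (card A) * (\<Sum>p\<in>A. (f p)^2)"
proof -
  define T where "T = (\<Sum>p\<in>A. f p)"
  define Q where "Q = (\<Sum>p\<in>A. (f p)^2)"
  define M where "M = real (card A)"
  have "0 \<le> (\<Sum>p\<in>A. (M * f p - T)^2)" by (rule sum_nonneg) auto
  also have "(\<Sum>p\<in>A. (M * f p - T)^2) = (\<Sum>p\<in>A. M^2 * (f p)^2 - 2 * M * T * f p + T^2)"
    by (rule sum.cong) (auto simp: power2_eq_square algebra_simps)
  also have "\<dots> = M^2 * Q - 2 * M * T * T + M * T^2"
    by (simp add: sum.distrib sum_subtractf sum_distrib_left[symmetric] Q_def T_def M_def)
  also have "\<dots> = M * (M * Q - T^2)" by (simp add: power2_eq_square algebra_simps)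
  finally have "0 \<le> M * (M * Q - T^2)" .
  moreover have "M \<ge> 0" by (simp add: M_def)
  ultimately have "M = 0 \<or> T^2 \<le> M * Q"
    by (metis diff_ge_0_iff_ge linorder_not_le mult_less_0_iff order_le_less)
  moreover have "M = 0 \<Longrightarrow> T = 0" using assms by (simp add: M_def T_def)
  ultimately show ?thesis unfolding T_def[symmetric] Q_def[symmetric] M_def[symmetric] by auto
qed

lemma counting:
  fixes L :: "'b set" and S :: "'b \<Rightarrow> nat set" and N k :: nat and b :: real
  assumes fin: "finite L"
    and SS: "\<And>c. c \<in> L \<Longrightarrow> S c \<subseteq> {..<N} \<and> card (S c) = k"
    and pair: "\<And>c c'. c \<in> L \<Longrightarrow> c' \<in> L \<Longrightarrow> c \<noteq> c' \<Longrightarrow> real (card (S c \<inter> S c')) \<le> b"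
  shows "(real (card L) * real k)^2 \<le> real N * (real (card L) * real k + real (card L) * (real (card L) - 1) * b)"
proof -
  define m where "m p = (\<Sum>c\<in>L. if p \<in> S c then 1 else 0 :: real)" for p
  have T: "(\<Sum>p<N. m p) = real (card L) * real k"
  proof -
    have "(\<Sum>p<N. m p) = (\<Sum>c\<in>L. \<Sum>p<N. if p \<in> S c then 1 else 0 :: real)"
      unfolding m_def by (rule sum.swap)
    also have "\<dots> = (\<Sum>c\<in>L. real k)"
    proof (rule sum.cong)
      fix c assume "c \<in> L"
      then have "{..<N} \<inter> S c = S c" "card (S c) = k" using SS by auto
      then show "(\<Sum>p<N. if p \<in> S c then 1 else 0 :: real) = real k" by (simp add: sum_ind)
    qed simp
    finally show ?thesis by simp
  qed
  have Q: "(\<Sum>p<N. (m p)^2) = (\<Sum>c\<in>L. \<Sum>c'\<in>L. real (card (S c \<inter> S c')))"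
  proof -
    have "(\<Sum>p<N. (m p)^2) = (\<Sum>p<N. \<Sum>c\<in>L. \<Sum>c'\<in>L. if p \<in> S c \<inter> S c' then 1 else 0 :: real)"
      unfolding m_def power2_eq_square sum_product by (intro sum.cong) auto
    also have "\<dots> = (\<Sum>c\<in>L. \<Sum>p<N. \<Sum>c'\<in>L. if p \<in> S c \<inter> S c' then 1 else 0 :: real)"
      by (rule sum.swap)
    also have "\<dots> = (\<Sum>c\<in>L. \<Sum>c'\<in>L. \<Sum>p<N. if p \<in> S c \<inter> S c' then 1 else 0 :: real)"
      by (rule sum.cong[OF HOL.refl], rule sum.swap)
    also have "\<dots> = (\<Sum>c\<in>L. \<Sum>c'\<in>L. real (card (S c \<inter> S c')))"
    proof (intro sum.cong HOL.refl)
      fix c c' assume "c \<in> L" "c' \<in> L"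
      then have "{..<N} \<inter> (S c \<inter> S c') = S c \<inter> S c'" using SS by auto
      then show "(\<Sum>p<N. if p \<in> S c \<inter> S c' then 1 else 0 :: real) = real (card (S c \<inter> S c'))"
        using sum_ind[of "{..<N}" "S c \<inter> S c'"] by simp
    qed
    finally show ?thesis .
  qed
  have B: "(\<Sum>c\<in>L. \<Sum>c'\<in>L. real (card (S c \<inter> S c'))) \<le> (\<Sum>c\<in>L. real k + (real (card L) - 1) * b)"
  proof (rule sum_mono)
    fix c assume c: "c \<in> L"
    have "(\<Sum>c'\<in>L. real (card (S c \<inter> S c'))) = real (card (S c \<inter> S c)) + (\<Sum>c'\<in>L - {c}. real (card (S c \<inter> S c')))"
      using fin c by (simp add: sum.remove)
    also have "(\<Sum>c'\<in>L - {c}. real (card (S c \<inter> S c'))) \<le> real (card (L - {c})) * b"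
      using pair c by (intro sum_bounded_above) auto
    also have "real (card (L - {c})) = real (card L) - 1" using fin c
    proof -
      have "card L \<ge> 1" using fin c by (metis One_nat_def Suc_leI card_gt_0_iff empty_iff)
      then show ?thesis using fin c by (simp add: card_Diff_singleton of_nat_diff)
    qed
    finally show "(\<Sum>c'\<in>L. real (card (S c \<inter> S c'))) \<le> real k + (real (card L) - 1) * b"
      using SS[OF c] by simp
  qed
  have "(real (card L) * real k)^2 \<le> real (card {..<N::nat}) * (\<Sum>p<N. (m p)^2)"
    using cauchy_schwarz_sum[of "{..<N}" m] T by simp
  also have "\<dots> \<le> real N * (real (card L) * (real k + (real (card L) - 1) * b))"
    using Q B by (simp add: mult_left_mono)
  finally show ?thesis by (simp add: algebra_simps)
qed


lemma final_alg:
  fixes l k N tI tD d b :: real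
  assumes "N = k + tI" "b = k + tD - d/2" "0 < N * (d/2 - tD) - tI * k"
    and "(l * k)^2 \<le> N * (l * k + l * (l - 1) * b)" "l \<ge> 0" "tI \<ge> 0" "k \<ge> 0"
  shows "l \<le> N * (d/2 - tD) / (N * (d/2 - tD) - tI * k)"
proof -
  define D where "D = N * (d/2 - tD) - tI * k"
  have D: "D > 0" using assms(3) D_def by simp
  have "l * D \<le> N * (d/2 - tD)"
  proof (cases "l = 0")
    case True
    have "tI * k \<ge> 0" using assms(6,7) by simp
    then show ?thesis using True D D_def by simp
  next
    case False
    then have lp: "l > 0" using assms(5) by simp
    have "l * (l * k^2) \<le> l * (N * (k + (l - 1) * b))"
      using assms(4) by (simp add: power2_eq_square algebra_simps)
    then have h: "l * k^2 \<le> N * (k + (l - 1) * b)" using lp by simp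
    have "l * D - N * (d/2 - tD) = l * k^2 - N * (k + (l - 1) * b)"
      unfolding D_def assms(1) assms(2) power2_eq_square by (simp add: field_simps)
    then show ?thesis using h by simp
  qed
  then show ?thesis using D D_def by (simp add: pos_le_divide_eq)
qed

theorem mainTheorem1:
  fixes \<Sigma> :: "'a set" and C :: "'a list set" and n d tI tD N :: nat and v :: "'a list"
  assumes "finite \<Sigma>"
    and "C \<subseteq> {x. set x \<subseteq> \<Sigma> \<and> length x = n}"
    and "card C \<ge> 2"
    and "d = min_lev_dist \<Sigma> C"
    and "tD \<le> n"
    and "N = n + tI - tD" and "N > 0"
    and "set v \<subseteq> \<Sigma>" and "length v = N"
    and "real d / 2 > real tD + real tI * real (n - tD) / real N"
  shows "real (card (lev_ball \<Sigma> v tD tI \<inter> C))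
           \<le> real N * (real d / 2 - real tD)
              / (real N * (real d / 2 - real tD) - real tI * real (n - tD))"
proof -
  have finC: "finite C" using assms(3) by (metis card.infinite not_numeral_le_zero)
  define k where "k = n - tD"
  define L where "L = lev_ball \<Sigma> v tD tI \<inter> C"
  have finL: "finite L" using finC L_def by simp
  have Nk: "N = k + tI" using assms(5,6) k_def by simp
  have ex: "\<exists>S. S \<subseteq> {..<N} \<and> card S = k \<and> subseq (nths v S) c" if c: "c \<in> L" for c
  proof -
    from c obtain i j where ij: "i \<le> tD" "j \<le> tI" "edits \<Sigma> v i j c"
      unfolding L_def lev_ball_def by blast
    from edits_common[OF ij(3)] obtain S0 where
      S0: "S0 \<subseteq> {..<length v}" "length v \<le> card S0 + j" "subseq (nths v S0) c" by blast
    have "k \<le> card S0" using S0(2) ij(2) Nk assms(9) by simp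
    then obtain S where S: "S \<subseteq> S0" "card S = k" by (meson obtain_subset_with_card_n)
    have "subseq (nths v S) c" using nths_mono[OF S(1), of v] S0(3) by (meson subseq_order.order_trans)
    then show ?thesis using S S0(1) assms(9) by (intro exI[of _ S]) auto
  qed
  then obtain S where S: "\<And>c. c \<in> L \<Longrightarrow> S c \<subseteq> {..<N} \<and> card (S c) = k \<and> subseq (nths v (S c)) c"
    by metis
  have dle: "d \<le> lev_dist \<Sigma> c c'" if "c \<in> C" "c' \<in> C" "c \<noteq> c'" for c c'
  proof -
    have fin: "finite {lev_dist \<Sigma> c1 c2 |c1 c2. c1 \<in> C \<and> c2 \<in> C \<and> c1 \<noteq> c2}"
      by (rule finite_subset[of _ "(\<lambda>(a,b). lev_dist \<Sigma> a b) ` (C \<times> C)"]) (auto simp: finC)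
    show ?thesis unfolding assms(4) min_lev_dist_def
      by (rule Min_le[OF fin]) (use that in blast)
  qed
  have pair: "real (card (S c \<inter> S c')) \<le> real n - real d / 2"
    if "c \<in> L" "c' \<in> L" "c \<noteq> c'" for c c'
  proof -
    define w where "w = nths v (S c \<inter> S c')"
    have "subseq w c" unfolding w_def using S[OF that(1)] nths_mono[of "S c \<inter> S c'" "S c" v]
      by (meson inf_le1 subseq_order.order_trans)
    moreover have "subseq w c'" unfolding w_def using S[OF that(2)] nths_mono[of "S c \<inter> S c'" "S c'" v]
      by (meson inf_le2 subseq_order.order_trans)
    moreover have cC: "c \<in> C" "c' \<in> C" using that L_def by auto
    ultimately have "lev_dist \<Sigma> c c' \<le> 2 * (n - length w)"
      using assms(2) by (intro lev_bound) auto
    moreover have "length w \<le> n" using \<open>subseq w c\<close> cC assms(2) list_emb_length by fastforce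
    moreover have "length w = card (S c \<inter> S c')" unfolding w_def
      using S[OF that(1)] assms(9) by (intro length_nths_sub) auto
    ultimately show ?thesis using dle[OF cC that(3)] by simp
  qed
  have cnt: "(real (card L) * real k)^2 \<le> real N * (real (card L) * real k + real (card L) * (real (card L) - 1) * (real n - real d / 2))"
  proof -
    have SS: "\<And>c. c \<in> L \<Longrightarrow> S c \<subseteq> {..<N} \<and> card (S c) = k" using S by blast
    show ?thesis by (rule counting[OF finL SS pair])
  qed
  have pos: "0 < real N * (real d / 2 - real tD) - real tI * real k"
  proof -
    have "real N > 0" using assms(7) by simp
    then have "real N * (real d / 2) > real N * (real tD + real tI * real k / real N)"
      using assms(10) k_def by simp
    then show ?thesis using \<open>real N > 0\<close> by (simp add: algebra_simps)
  qed
  have "real (card L) \<le> real N * (real d / 2 - real tD) / (real N * (real d / 2 - real tD) - real tI * real k)"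
    by (rule final_alg[OF _ _ pos cnt]) (use Nk k_def assms(5) in auto)
  then show ?thesis unfolding L_def k_def .
qed

end
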